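(* Let $f:\mathcal D\subset\Omega\times(0,\infty)\to\Omega\times(0,\infty)$ be a measure-preserving embedding, and suppose there is $W\in\mathcal C^1_\psi(\Omega\times(0,\infty))$ and constants $\beta,\delta>0$ with $0<\beta\le\partial_rW(\omega,r)\le\delta$ for all $(\omega,r)\in\Omega\times(0,\infty)$ and $W(f(\omega,r))\le W(\omega,r)+k(r)$ for all $(\omega,r)\in\mathcal D$, where $k:(0,\infty)\to\mathbb R$ is decreasing, bounded, with $\lim_{r\to\infty}k(r)=0$. Let $(\epsilon_j)_{j\in\mathbb N}$, $(W_j)_{j\in\mathbb N}$ be sequences of positive numbers with $\sum_j\epsilon_j<\infty$, $\lim_{j\to\infty}W_j=\infty$ and $\lim_{j\to\infty}\epsilon_j^{-1}k\big(\tfrac{1}{4\delta}W_j\big)=0$. Put $$\mathcal A=\bigcup_{j\in\mathbb N}\mathcal A_j,\qquad \mathcal A_j=\{(\omega,r)\in\Omega\times(0,\infty):|W(\omega,r)-W_j|\le\epsilon_j\}.$$ Then $(\mu_\Omega\otimes\lambda)(\mathcal A)<\infty$, and for every $(\omega_0,r_0)\in\mathcal U$ there is $K\in\mathbb N$ with $(\omega_K,r_K)=f^K(\omega_0,r_0)\in\mathcal A$.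
   Context: $\Omega$ is a commutative (written additively), compact, metrizable topological group, and $\psi:\mathbb R\to\Omega$ is a continuous group homomorphism with $\psi(\mathbb R)$ dense. $\mu_\Omega$ is the Haar probability measure of $\Omega$ and $\lambda$ Lebesgue measure on $\mathbb R$. For $U:\Omega\to\mathbb R$, $\partial_\psi U(\omega)=\lim_{t\to0}\frac{U(\omega+\psi(t))-U(\omega)}{t}$; $\mathcal C^1_\psi(\Omega)$ is the space of continuous $U$ with $\partial_\psi U$ existing everywhere and continuous; $\mathcal C^1_\psi(\Omega\times(0,\infty))$ is the set of $W(\omega,r)$ with $W(\cdot,r)\in\mathcal C^1_\psi(\Omega)$ for all $r$ and $W(\omega,\cdot)\in\mathcal C^1(0,\infty)$ for all $\omega$. A measure-preserving embedding is a continuous injective map $f:\mathcal D\to\Omega\times(0,\infty)$, $\mathcal D\subset\Omega\times(0,\infty)$ open, with $(\mu_\Omega\otimes\lambda)(f(\mathcal B))=(\mu_\Omega\otimes\lambda)(\mathcal B)$ for Borel $\mathcal B\subset\mathcal D$. Set $\mathcal D_1=\mathcal D$, $\mathcal D_{n+1}=f^{-1}(\mathcal D_n)$, $\mathcal D_\infty=\bigcap_n\mathcal D_n$; for $(\omega_0,r_0)\in\mathcal D_\infty$ write $(\omega_n,r_n)=f^n(\omega_0,r_0)$, and $\mathcal U=\{(\omega_0,r_0)\in\mathcal D_\infty:\limsup_{n\to\infty}r_n=\infty\}$. *)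

theory Defs
  imports "HOL-Probability.Probability"
begin

definition haar_prob :: "'a::{metric_space, topological_ab_group_add} measure \<Rightarrow> bool" where
  "haar_prob \<mu> \<longleftrightarrow> prob_space \<mu> \<and> sets \<mu> = sets borel \<and>
     (\<forall>x A. A \<in> sets borel \<longrightarrow> measure \<mu> ((\<lambda>y. x + y) ` A) = measure \<mu> A)"

definition dense_flow :: "(real \<Rightarrow> 'a::{metric_space, topological_ab_group_add}) \<Rightarrow> bool" where
  "dense_flow \<psi> \<longleftrightarrow> continuous_on UNIV \<psi> \<and> (\<forall>s t. \<psi> (s + t) = \<psi> s + \<psi> t)
     \<and> closure (range \<psi>) = UNIV"

definition has_psi_deriv ::
    "(real \<Rightarrow> 'a::{metric_space, topological_ab_group_add}) \<Rightarrow> ('a \<Rightarrow> real) \<Rightarrow> 'a \<Rightarrow> real \<Rightarrow> bool" where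
  "has_psi_deriv \<psi> U \<omega> D \<longleftrightarrow> ((\<lambda>t. (U (\<omega> + \<psi> t) - U \<omega>) / t) \<longlongrightarrow> D) (at 0)"

definition C1_psi :: "(real \<Rightarrow> 'a::{metric_space, topological_ab_group_add}) \<Rightarrow> ('a \<Rightarrow> real) \<Rightarrow> bool" where
  "C1_psi \<psi> U \<longleftrightarrow> continuous_on UNIV U \<and>
     (\<exists>DU. (\<forall>\<omega>. has_psi_deriv \<psi> U \<omega> (DU \<omega>)) \<and> continuous_on UNIV DU)"

text \<open>The space C^1_psi(Omega x (0,oo)); values of W for r <= 0 are irrelevant.\<close>
definition C1_psi_prod ::
    "(real \<Rightarrow> 'a::{metric_space, topological_ab_group_add}) \<Rightarrow> ('a \<times> real \<Rightarrow> real) \<Rightarrow> bool" where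
  "C1_psi_prod \<psi> W \<longleftrightarrow> (\<forall>r>0. C1_psi \<psi> (\<lambda>\<omega>. W (\<omega>, r))) \<and>
     (\<forall>\<omega>. \<exists>Wr. (\<forall>r>0. ((\<lambda>s. W (\<omega>, s)) has_real_derivative Wr r) (at r))
              \<and> continuous_on {0<..} Wr)"

definition mp_embedding ::
    "'a::{metric_space, topological_ab_group_add} measure \<Rightarrow> ('a \<times> real) set \<Rightarrow> ('a \<times> real \<Rightarrow> 'a \<times> real) \<Rightarrow> bool" where
  "mp_embedding \<mu> D f \<longleftrightarrow> open D \<and> D \<subseteq> UNIV \<times> {0<..} \<and> f ` D \<subseteq> UNIV \<times> {0<..} \<and>
     continuous_on D f \<and> inj_on f D \<and>
     (\<forall>B. B \<in> sets (\<mu> \<Otimes>\<^sub>M lborel) \<longrightarrow> B \<subseteq> D \<longrightarrow>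
        f ` B \<in> sets (\<mu> \<Otimes>\<^sub>M lborel) \<and>
        emeasure (\<mu> \<Otimes>\<^sub>M lborel) (f ` B) = emeasure (\<mu> \<Otimes>\<^sub>M lborel) B)"

text \<open>D_{n+1} = f^{-1}(D_n), indexed from 0 (Dn 0 = D_1 = D).\<close>
fun Dn :: "('b \<Rightarrow> 'b) \<Rightarrow> 'b set \<Rightarrow> nat \<Rightarrow> 'b set" where
  "Dn f D 0 = D"
| "Dn f D (Suc n) = D \<inter> f -` Dn f D n"

definition Dinf :: "('b \<Rightarrow> 'b) \<Rightarrow> 'b set \<Rightarrow> 'b set" where
  "Dinf f D = (\<Inter>n. Dn f D n)"

definition Uset :: "('a \<times> real \<Rightarrow> 'a \<times> real) \<Rightarrow> ('a \<times> real) set \<Rightarrow> ('a \<times> real) set" where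
  "Uset f D = {x \<in> Dinf f D. limsup (\<lambda>n. ereal (snd ((f ^^ n) x))) = \<infinity>}"

end

theory Submission imports Defs begin

lemma W_incr:
  assumes C1: "C1_psi_prod \<psi> W"
    and bd: "\<And>\<omega> r. r > 0 \<Longrightarrow> \<beta> \<le> deriv (\<lambda>s. W (\<omega>, s)) r \<and> deriv (\<lambda>s. W (\<omega>, s)) r \<le> \<delta>"
    and s: "0 < s" "s \<le> t"
  shows "\<beta>*(t-s) \<le> W(\<omega>,t) - W(\<omega>,s) \<and> W(\<omega>,t) - W(\<omega>,s) \<le> \<delta>*(t-s)"
proof (cases "s = t")
  case True then show ?thesis by simp
next
  case False
  then have st: "s < t" using s by simp
  from C1 obtain Wr where Wr: "\<And>r. r>0 \<Longrightarrow> ((\<lambda>s. W (\<omega>, s)) has_real_derivative Wr r) (at r)"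
    unfolding C1_psi_prod_def by blast
  have "\<exists>z. s < z \<and> z < t \<and> (W(\<omega>,t) - W(\<omega>,s) = (t - s) * Wr z)"
    by (rule MVT2[OF st, of "\<lambda>s. W (\<omega>, s)" Wr]) (use Wr s in auto)
  then obtain z where z: "s < z" "z < t" "W(\<omega>,t) - W(\<omega>,s) = (t - s) * Wr z" by blast
  have "deriv (\<lambda>s. W (\<omega>, s)) z = Wr z" using Wr[of z] z s by (intro DERIV_imp_deriv) auto
  then have "\<beta> \<le> Wr z" "Wr z \<le> \<delta>" using bd[of z \<omega>] z s by auto
  then show ?thesis using z st
    by (auto simp: mult.commute intro: mult_left_mono)
qed

lemma iter_in_D: "x \<in> Dn f D n \<Longrightarrow> (f ^^ n) x \<in> D"
proof (induction n arbitrary: x)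
  case 0 then show ?case by simp
next
  case (Suc n)
  then have "f x \<in> Dn f D n" by simp
  then have "(f ^^ n) (f x) \<in> D" using Suc.IH by blast
  then show ?case by (metis funpow_Suc_right comp_apply)
qed

lemma Gt_eq:
  assumes C1: "C1_psi_prod \<psi> W"
    and bd: "\<And>\<omega> r. r > 0 \<Longrightarrow> \<beta> \<le> deriv (\<lambda>s. W (\<omega>, s)) r \<and> deriv (\<lambda>s. W (\<omega>, s)) r \<le> \<delta>"
    and dp: "\<delta> > 0" and bp: "\<beta> > 0"
  shows "{(\<omega>,r). r>0 \<and> W(\<omega>,r) > c} = (\<Union>q\<in>\<rat> \<inter> {0<..}. {\<omega>. c < W(\<omega>, q)} \<times> {q<..})"
proof -
  have 1: "\<exists>q\<in>\<rat> \<inter> {0<..}. c < W(\<omega>, q) \<and> q < r" if r: "r > 0" "W(\<omega>,r) > c" for \<omega> r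
  proof -
    define e where "e = (W(\<omega>,r) - c)/\<delta>"
    have e: "e > 0" using r dp by (simp add: e_def)
    obtain q where q: "q \<in> \<rat>" "max 0 (r - e) < q" "q < r"
      using Rats_dense_in_real[of "max 0 (r - e)" r] r e by auto
    have "W(\<omega>,r) - W(\<omega>,q) \<le> \<delta>*(r-q)" using W_incr[OF C1 bd, of q r \<omega>] q by auto
    also have "\<dots> < \<delta> * e" using q dp by (intro mult_strict_left_mono) auto
    also have "\<delta> * e = W(\<omega>,r) - c" using dp by (simp add: e_def)
    finally have "c < W(\<omega>,q)" by simp
    then show ?thesis using q by auto
  qed
  have 2: "r > 0 \<and> c < W(\<omega>,r)" if q: "q > 0" "c < W(\<omega>, q)" "q < r" for \<omega> r q
  proof -
    have "\<beta>*(r-q) \<le> W(\<omega>,r) - W(\<omega>,q)" using W_incr[OF C1 bd, of q r \<omega>] q by auto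
    moreover have "0 \<le> \<beta>*(r-q)" using q bp by auto
    ultimately show ?thesis using q by linarith
  qed
  show ?thesis
    apply (rule set_eqI)
    subgoal for x using 1[of "snd x" "fst x"] 2[of _ "fst x" "snd x"] by (cases x) auto
    done
qed

lemma Lt_eq:
  assumes C1: "C1_psi_prod \<psi> W"
    and bd: "\<And>\<omega> r. r > 0 \<Longrightarrow> \<beta> \<le> deriv (\<lambda>s. W (\<omega>, s)) r \<and> deriv (\<lambda>s. W (\<omega>, s)) r \<le> \<delta>"
    and dp: "\<delta> > 0" and bp: "\<beta> > 0"
  shows "{(\<omega>,r). r>0 \<and> W(\<omega>,r) < c} = (\<Union>q\<in>\<rat> \<inter> {0<..}. {\<omega>. W(\<omega>, q) < c} \<times> {0<..<q})"
proof -
  have 1: "\<exists>q\<in>\<rat> \<inter> {0<..}. W(\<omega>, q) < c \<and> r < q" if r: "r > 0" "W(\<omega>,r) < c" for \<omega> r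
  proof -
    define e where "e = (c - W(\<omega>,r))/\<delta>"
    have e: "e > 0" using r dp by (simp add: e_def)
    obtain q where q: "q \<in> \<rat>" "r < q" "q < r + e"
      using Rats_dense_in_real[of r "r + e"] r e by auto
    have "W(\<omega>,q) - W(\<omega>,r) \<le> \<delta>*(q-r)" using W_incr[OF C1 bd, of r q \<omega>] q r by auto
    also have "\<dots> < \<delta> * e" using q dp by (intro mult_strict_left_mono) auto
    also have "\<delta> * e = c - W(\<omega>,r)" using dp by (simp add: e_def)
    finally have "W(\<omega>,q) < c" by simp
    then show ?thesis using q r by auto
  qed
  have 2: "W(\<omega>,r) < c" if q: "q > 0" "W(\<omega>, q) < c" "0 < r" "r < q" for \<omega> r q
  proof -
    have "\<beta>*(q-r) \<le> W(\<omega>,q) - W(\<omega>,r)" using W_incr[OF C1 bd, of r q \<omega>] q by auto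
    moreover have "0 \<le> \<beta>*(q-r)" using q bp by auto
    ultimately show ?thesis using q by linarith
  qed
  show ?thesis
    apply (rule set_eqI)
    subgoal for x using 1[of "snd x" "fst x"] 2[of _ "fst x" "snd x"] by (cases x) auto
    done
qed

lemma Aj_sets:
  fixes \<mu> :: "'a::{metric_space, topological_ab_group_add} measure"
  assumes C1: "C1_psi_prod \<psi> W"
    and bd: "\<And>\<omega> r. r > 0 \<Longrightarrow> \<beta> \<le> deriv (\<lambda>s. W (\<omega>, s)) r \<and> deriv (\<lambda>s. W (\<omega>, s)) r \<le> \<delta>"
    and dp: "\<delta> > 0" and bp: "\<beta> > 0"
    and sm: "sets \<mu> = sets borel"
  shows "{(\<omega>, r). r > 0 \<and> \<bar>W (\<omega>, r) - a\<bar> \<le> e} \<in> sets (\<mu> \<Otimes>\<^sub>M lborel)"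
proof -
  have cont: "continuous_on UNIV (\<lambda>\<omega>. W(\<omega>,q))" if "q > 0" for q
    using C1 that unfolding C1_psi_prod_def C1_psi_def by blast
  have sp: "space \<mu> = UNIV" using sets_eq_imp_space_eq[OF sm] by simp
  have cQ: "countable (\<rat> \<inter> {0<..} :: real set)" using countable_rat by (rule countable_subset[rotated]) auto
  have G: "{(\<omega>,r). r>0 \<and> W(\<omega>,r) > c} \<in> sets (\<mu> \<Otimes>\<^sub>M lborel)" for c
    apply (subst Gt_eq[OF C1 bd dp bp], blast)
  proof (rule sets.countable_UN''[OF cQ])
    fix q :: real assume "q \<in> \<rat> \<inter> {0<..}"
    then have "open {\<omega>. c < W(\<omega>, q)}" using cont[of q] by (intro open_Collect_less) auto
    then have "{\<omega>. c < W(\<omega>, q)} \<in> sets \<mu>" unfolding sm by simp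
    then show "{\<omega>. c < W(\<omega>, q)} \<times> {q<..} \<in> sets (\<mu> \<Otimes>\<^sub>M lborel)" by (intro pair_measureI) auto
  qed
  have L: "{(\<omega>,r). r>0 \<and> W(\<omega>,r) < c} \<in> sets (\<mu> \<Otimes>\<^sub>M lborel)" for c
    apply (subst Lt_eq[OF C1 bd dp bp], blast)
  proof (rule sets.countable_UN''[OF cQ])
    fix q :: real assume "q \<in> \<rat> \<inter> {0<..}"
    then have "open {\<omega>. W(\<omega>, q) < c}" using cont[of q] by (intro open_Collect_less) auto
    then have "{\<omega>. W(\<omega>, q) < c} \<in> sets \<mu>" unfolding sm by simp
    then show "{\<omega>. W(\<omega>, q) < c} \<times> {0<..<q} \<in> sets (\<mu> \<Otimes>\<^sub>M lborel)" by (intro pair_measureI) auto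
  qed
  have P: "UNIV \<times> ({0<..} :: real set) \<in> sets (\<mu> \<Otimes>\<^sub>M lborel)"
    using sets.top[of \<mu>] sp by (intro pair_measureI) (auto intro!: borel_open)
  have eq: "{(\<omega>, r). r > 0 \<and> \<bar>W (\<omega>, r) - a\<bar> \<le> e} =
     (UNIV \<times> {0<..}) - {(\<omega>,r). r>0 \<and> W(\<omega>,r) > a + e} - {(\<omega>,r). r>0 \<and> W(\<omega>,r) < a - e}"
    by auto
  show ?thesis unfolding eq using P G L by auto
qed

lemma Aj_measure:
  fixes \<mu> :: "'a::{metric_space, topological_ab_group_add} measure"
  assumes C1: "C1_psi_prod \<psi> W"
    and bd: "\<And>\<omega> r. r > 0 \<Longrightarrow> \<beta> \<le> deriv (\<lambda>s. W (\<omega>, s)) r \<and> deriv (\<lambda>s. W (\<omega>, s)) r \<le> \<delta>"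
    and dp: "\<delta> > 0" and bp: "\<beta> > 0"
    and sm: "sets \<mu> = sets borel" and ps: "prob_space \<mu>" and e: "e \<ge> 0"
  shows "emeasure (\<mu> \<Otimes>\<^sub>M lborel) {(\<omega>, r). r > 0 \<and> \<bar>W (\<omega>, r) - a\<bar> \<le> e} \<le> ennreal (4*e/\<beta>)"
proof -
  let ?S = "{(\<omega>, r). r > 0 \<and> \<bar>W (\<omega>, r) - a\<bar> \<le> e}"
  have sec: "emeasure lborel (Pair \<omega> -` ?S) \<le> ennreal (4*e/\<beta>)" for \<omega>
  proof (cases "Pair \<omega> -` ?S = {}")
    case True then show ?thesis by (metis emeasure_empty zero_le)
  next
    case False
    then obtain r0 where r0: "r0 > 0" "\<bar>W (\<omega>, r0) - a\<bar> \<le> e" by auto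
    have sub: "Pair \<omega> -` ?S \<subseteq> {r0 - 2*e/\<beta> .. r0 + 2*e/\<beta>}"
    proof
      fix r assume "r \<in> Pair \<omega> -` ?S"
      then have r: "r > 0" "\<bar>W (\<omega>, r) - a\<bar> \<le> e" by auto
      have "\<beta> * \<bar>r - r0\<bar> \<le> \<bar>W (\<omega>, r) - W(\<omega>, r0)\<bar>"
      proof (cases "r0 \<le> r")
        case True then show ?thesis using W_incr[OF C1 bd, of r0 r \<omega>] r0 by auto
      next
        case False then show ?thesis using W_incr[OF C1 bd, of r r0 \<omega>] r by auto
      qed
      also have "\<dots> \<le> 2*e" using r r0 by linarith
      finally have "\<bar>r - r0\<bar> \<le> 2*e/\<beta>" using bp by (simp add: field_simps)
      then show "r \<in> {r0 - 2*e/\<beta> .. r0 + 2*e/\<beta>}" by auto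
    qed
    have "emeasure lborel (Pair \<omega> -` ?S) \<le> emeasure lborel {r0 - 2*e/\<beta> .. r0 + 2*e/\<beta>}"
      by (rule emeasure_mono[OF sub]) simp
    also have "\<dots> = ennreal (4*e/\<beta>)" using e bp by (simp add: field_simps)
    finally show ?thesis .
  qed
  have "emeasure (\<mu> \<Otimes>\<^sub>M lborel) ?S = (\<integral>\<^sup>+\<omega>. emeasure lborel (Pair \<omega> -` ?S) \<partial>\<mu>)"
    by (rule lborel.emeasure_pair_measure_alt[OF Aj_sets[OF C1 bd dp bp sm]])
  also have "\<dots> \<le> (\<integral>\<^sup>+\<omega>. ennreal (4*e/\<beta>) \<partial>\<mu>)"
    by (intro nn_integral_mono sec)
  also have "\<dots> = ennreal (4*e/\<beta>)" using prob_space.emeasure_space_1[OF ps] by simp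
  finally show ?thesis .
qed

theorem lemma4p3:
  fixes \<mu> :: "'a::{metric_space, topological_ab_group_add} measure"
    and \<psi> :: "real \<Rightarrow> 'a"
    and D :: "('a \<times> real) set"
    and f :: "'a \<times> real \<Rightarrow> 'a \<times> real"
    and W :: "'a \<times> real \<Rightarrow> real"
    and k :: "real \<Rightarrow> real"
    and \<beta> \<delta> :: real
    and \<epsilon> Wj :: "nat \<Rightarrow> real"
  assumes compact_Omega: "compact (UNIV :: 'a set)"
    and haar: "haar_prob \<mu>"
    and psi: "dense_flow \<psi>"
    and emb: "mp_embedding \<mu> D f"
    and W_C1: "C1_psi_prod \<psi> W"
    and beta_pos: "\<beta> > 0" and delta_pos: "\<delta> > 0"
    and W_r_bounds: "\<And>\<omega> r. r > 0 \<Longrightarrow>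
         \<beta> \<le> deriv (\<lambda>s. W (\<omega>, s)) r \<and> deriv (\<lambda>s. W (\<omega>, s)) r \<le> \<delta>"
    and W_step: "\<And>\<omega> r. (\<omega>, r) \<in> D \<Longrightarrow> W (f (\<omega>, r)) \<le> W (\<omega>, r) + k r"
    and k_decr: "\<And>s t. 0 < s \<Longrightarrow> s \<le> t \<Longrightarrow> k t \<le> k s"
    and k_bdd: "bounded (k ` {0<..})"
    and k_lim: "(k \<longlongrightarrow> 0) at_top"
    and eps_pos: "\<And>j. \<epsilon> j > 0"
    and Wj_pos: "\<And>j. Wj j > 0"
    and eps_summable: "summable \<epsilon>"
    and Wj_lim: "filterlim Wj at_top sequentially"
    and ratio_lim: "(\<lambda>j. k (Wj j / (4 * \<delta>)) / \<epsilon> j) \<longlonglongrightarrow> 0"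
  defines "A \<equiv> (\<Union>j. {(\<omega>, r). r > 0 \<and> \<bar>W (\<omega>, r) - Wj j\<bar> \<le> \<epsilon> j})"
  shows "A \<in> sets (\<mu> \<Otimes>\<^sub>M lborel) \<and> emeasure (\<mu> \<Otimes>\<^sub>M lborel) A < \<infinity> \<and>
         (\<forall>x \<in> Uset f D. \<exists>K. (f ^^ K) x \<in> A)"
proof -
  have sm: "sets \<mu> = sets borel" and ps: "prob_space \<mu>" using haar unfolding haar_prob_def by auto
  define Aj where "Aj j = {(\<omega>, r). r > 0 \<and> \<bar>W (\<omega>, r) - Wj j\<bar> \<le> \<epsilon> j}" for j
  have AU: "A = (\<Union>j. Aj j)" unfolding A_def Aj_def by simp
  have Ajs: "Aj j \<in> sets (\<mu> \<Otimes>\<^sub>M lborel)" for j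
    unfolding Aj_def by (rule Aj_sets[OF W_C1 W_r_bounds delta_pos beta_pos sm], blast)
  have Ajm: "emeasure (\<mu> \<Otimes>\<^sub>M lborel) (Aj j) \<le> ennreal (4 * \<epsilon> j / \<beta>)" for j
    unfolding Aj_def
    by (rule Aj_measure[OF W_C1 W_r_bounds delta_pos beta_pos sm ps], blast)
      (use eps_pos[of j] in auto)
  have part1: "A \<in> sets (\<mu> \<Otimes>\<^sub>M lborel)" unfolding AU using Ajs by auto
  have sumr: "summable (\<lambda>j. 4 * \<epsilon> j / \<beta>)"
    using eps_summable by (intro summable_divide summable_mult)
  have "emeasure (\<mu> \<Otimes>\<^sub>M lborel) A \<le> (\<Sum>j. emeasure (\<mu> \<Otimes>\<^sub>M lborel) (Aj j))"
    unfolding AU by (rule emeasure_subadditive_countably) (use Ajs in auto)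
  also have "\<dots> \<le> (\<Sum>j. ennreal (4 * \<epsilon> j / \<beta>))"
    by (intro suminf_le Ajm summableI)
  also have "\<dots> = ennreal (\<Sum>j. 4 * \<epsilon> j / \<beta>)"
    using eps_pos beta_pos sumr by (intro suminf_ennreal2) (auto intro: less_imp_le)
  also have "\<dots> < \<infinity>" by simp
  finally have part2: "emeasure (\<mu> \<Otimes>\<^sub>M lborel) A < \<infinity>" .
  have contW1: "continuous_on UNIV (\<lambda>\<omega>. W(\<omega>,1))"
    using W_C1 unfolding C1_psi_prod_def C1_psi_def by auto
  have "bounded (range (\<lambda>\<omega>. W(\<omega>,1)))"
    by (rule compact_imp_bounded, rule compact_continuous_image[OF contW1 compact_Omega])
  then obtain B where B: "\<And>\<omega>. \<bar>W(\<omega>,1)\<bar> \<le> B" unfolding bounded_real by auto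
  define C where "C = max B 0"
  have C: "\<And>\<omega>. \<bar>W(\<omega>,1)\<bar> \<le> C" "C \<ge> 0" using B unfolding C_def by (auto intro: order.trans[OF _ max.cobounded1])
  from k_bdd obtain M0 where "\<And>t. t > 0 \<Longrightarrow> \<bar>k t\<bar> \<le> M0" unfolding bounded_real by auto
  then obtain M where M: "\<And>t. t > 0 \<Longrightarrow> \<bar>k t\<bar> \<le> M" "M \<ge> 0"
    by (metis abs_ge_zero max.coboundedI1 max.commute order.trans)
  have Wup: "W(\<omega>,r) \<le> C + \<delta> * r" if "r > 0" for \<omega> r
  proof (cases "r \<ge> 1")
    case True
    then have "W(\<omega>,r) - W(\<omega>,1) \<le> \<delta>*(r-1)" using W_incr[OF W_C1 W_r_bounds, of 1 r \<omega>] by auto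
    then show ?thesis using C(1)[of \<omega>] delta_pos by (auto simp: algebra_simps)
  next
    case False
    then have "\<beta>*(1-r) \<le> W(\<omega>,1) - W(\<omega>,r)" using W_incr[OF W_C1 W_r_bounds, of r 1 \<omega>] that by auto
    moreover have "0 \<le> \<beta>*(1-r)" using False beta_pos by auto
    moreover have "0 \<le> \<delta> * r" using that delta_pos by auto
    ultimately show ?thesis using C(1)[of \<omega>] by linarith
  qed
  have Wlow: "W(\<omega>,r) \<ge> - C + \<beta> * (r - 1)" if "r \<ge> 1" for \<omega> r
  proof -
    have "\<beta>*(r-1) \<le> W(\<omega>,r) - W(\<omega>,1)" using W_incr[OF W_C1 W_r_bounds, of 1 r \<omega>] that by auto
    then show ?thesis using C(1)[of \<omega>] by linarith
  qed
  have part3: "\<exists>K. (f ^^ K) x \<in> A" if xU: "x \<in> Uset f D" for x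
  proof -
    define R where "R n = snd ((f ^^ n) x)" for n
    define V where "V n = W ((f ^^ n) x)" for n
    have inD: "(f ^^ n) x \<in> D" for n
      using xU iter_in_D[of x f D n] unfolding Uset_def Dinf_def by auto
    have Dsub: "D \<subseteq> UNIV \<times> {0<..}" using emb unfolding mp_embedding_def by auto
    have Rpos: "R n > 0" for n using inD[of n] Dsub unfolding R_def by auto
    have step: "V (Suc n) \<le> V n + k (R n)" for n
    proof -
      have "W (f (fst ((f ^^ n) x), snd ((f ^^ n) x))) \<le> W (fst ((f ^^ n) x), snd ((f ^^ n) x)) + k (snd ((f ^^ n) x))"
        using W_step[of "fst ((f ^^ n) x)" "snd ((f ^^ n) x)"] inD[of n] by simp
      then show ?thesis unfolding V_def R_def by simp
    qed
    have unb: "\<exists>n. R n > b" for b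
    proof (rule ccontr)
      assume "\<not> ?thesis"
      then have "\<forall>n. ereal (R n) \<le> ereal b" by (simp add: not_less)
      then have "limsup (\<lambda>n. ereal (R n)) \<le> ereal b"
        by (intro Limsup_bounded) (auto intro: always_eventually)
      moreover have "limsup (\<lambda>n. ereal (R n)) = \<infinity>" using xU unfolding Uset_def R_def by auto
      ultimately show False by simp
    qed
    have ev1: "eventually (\<lambda>j. k (Wj j / (4 * \<delta>)) / \<epsilon> j < 2) sequentially"
      using ratio_lim by (rule order_tendstoD(2)) simp
    have ev2: "eventually (\<lambda>j. \<epsilon> j < 1) sequentially"
      using summable_LIMSEQ_zero[OF eps_summable] by (rule order_tendstoD(2)) simp
    have ev3: "eventually (\<lambda>j. max (2*(M+C)) (V 0 + 1) \<le> Wj j) sequentially"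
      using Wj_lim unfolding filterlim_at_top by blast
    obtain j where j1: "k (Wj j / (4 * \<delta>)) / \<epsilon> j < 2" and j2: "\<epsilon> j < 1"
      and j3: "max (2*(M+C)) (V 0 + 1) \<le> Wj j"
      using eventually_happens'[OF sequentially_bot eventually_conj[OF ev1 eventually_conj[OF ev2 ev3]]] by blast
    have ej: "\<epsilon> j > 0" "Wj j > 0" using eps_pos Wj_pos by auto
    define T where "T = Wj j + \<epsilon> j"
    obtain n where n: "R n > 1 + (T + C) / \<beta>" using unb by blast
    have "V n > T"
    proof -
      have "R n \<ge> 1" using n C(2) ej beta_pos unfolding T_def
        by (smt (verit) divide_nonneg_pos)
      then have "V n \<ge> - C + \<beta> * (R n - 1)" using Wlow unfolding V_def R_def
        by (metis prod.collapse)
      moreover have "\<beta> * (R n - 1) > T + C"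
        using n beta_pos by (simp add: field_simps)
      ultimately show ?thesis by linarith
    qed
    then have exT: "\<exists>n. V n > T" by blast
    define m where "m = (LEAST n. V n > T)"
    have Vm: "V m > T" unfolding m_def by (rule LeastI_ex[OF exT])
    have "m \<noteq> 0"
    proof
      assume "m = 0"
      then have "V 0 > T" using Vm by simp
      then show False using j2 j3 ej unfolding T_def by linarith
    qed
    then obtain p where mp: "m = Suc p" by (cases m) auto
    have Vp: "V p \<le> T" using not_less_Least[of p "\<lambda>n. V n > T"] mp unfolding m_def by auto
    have Vp2: "V p > T - k (R p)" using step[of p] Vm mp by simp
    have "k (R p) \<le> M" using M(1)[OF Rpos[of p]] by simp
    then have "V p > Wj j - M" using Vp2 ej unfolding T_def by linarith
    moreover have "V p \<le> C + \<delta> * R p" using Wup[OF Rpos[of p]] unfolding V_def R_def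
      by (metis prod.collapse)
    ultimately have "\<delta> * R p \<ge> Wj j / 4" using j3 ej by auto
    then have Rp: "R p \<ge> Wj j / (4 * \<delta>)" using delta_pos by (simp add: field_simps)
    have "k (R p) \<le> k (Wj j / (4 * \<delta>))"
      by (rule k_decr[OF _ Rp]) (use ej delta_pos in simp)
    also have "\<dots> < 2 * \<epsilon> j" using j1 ej by (simp add: divide_less_eq)
    finally have "V p > Wj j - \<epsilon> j" using Vp2 unfolding T_def by linarith
    then have "\<bar>W ((f ^^ p) x) - Wj j\<bar> \<le> \<epsilon> j" using Vp unfolding V_def T_def by linarith
    then have "(f ^^ p) x \<in> Aj j" using Rpos[of p] unfolding Aj_def R_def
      by (cases "(f ^^ p) x") auto
    then show ?thesis unfolding AU by blast
  qed
  show ?thesis using part1 part2 part3 by blast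
qed

end
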